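(* Let $\mathcal{A}$ be a commutative $\sigma$-finite W*-algebra or a commutative AW*-algebra, and let $\mathcal{E}$ be a Hilbert C*-module over $\mathcal{A}$ of rank $d$. Let $\{\tau_j\}_{j=1}^n$ be a collection in $\mathcal{E}$ with $\langle\tau_j,\tau_j\rangle=1$ for all $1\leq j\leq n$. Then \[ n^2\geq \|\mathrm{MFP}(\{\tau_j\}_{j=1}^n)\|\geq \mathrm{MFP}(\{\tau_j\}_{j=1}^n)\geq \frac{n^2}{d}. \]
   Context: A W*-algebra is $\sigma$-finite if it contains at most countably many mutually orthogonal (nonzero) projections. A C*-algebra is an AW*-algebra if every set of orthogonal projections has a supremum and every maximal commutative self-adjoint subalgebra is generated by its projections. Such algebras are unital, with identity $1$. The $\mathcal{A}$-valued inner product on $\mathcal{E}$ is linear in the first variable and conjugate-linear in the second. $\mathcal{E}$ has rank $d$ if it has an orthonormal basis $\{\omega_j\}_{j=1}^d$, i.e. $\langle\omega_j,\omega_k\rangle=\delta_{jk}1$ and $x=\sum_{j=1}^d\langle x,\omega_j\rangle\omega_j$ for all $x$. The modular frame potential is $\mathrm{MFP}(\{\tau_j\}_{j=1}^n)=\sum_{j=1}^n\sum_{k=1}^n\langle \tau_j, \tau_k\rangle \langle \tau_k, \tau_j\rangle\in\mathcal{A}$. Inequalities between elements of $\mathcal{A}$ are in the order on self-adjoint elements, a real number $c$ being identified with $c\cdot1$; $\|\cdot\|$ is the C*-norm. *)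

theory Defs
  imports "HOL-Analysis.Analysis"
begin

(* A commutative unital C*-algebra is modelled by a type 'a of class
   {real_normed_algebra_1, banach, comm_ring_1} (Banach, unital, commutative)
   together with an involution st and a complex scalar multiplication sc,
   compatible with the real scalar multiplication of the type class.
   A Hilbert C*-module over it is a type 'm (abelian group) with an action
   act :: 'a => 'm => 'm and an 'a-valued inner product ip, linear in the
   first variable.  Complex scalars act on 'm via act (sc c 1). *)

definition cstar_algebra :: "('a::{real_normed_algebra_1,banach,comm_ring_1} \<Rightarrow> 'a) \<Rightarrow> (complex \<Rightarrow> 'a \<Rightarrow> 'a) \<Rightarrow> bool" where
  "cstar_algebra st sc \<longleftrightarrow>
     (\<forall>c d a. sc (c + d) a = sc c a + sc d a) \<and>
     (\<forall>c a b. sc c (a + b) = sc c a + sc c b) \<and>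
     (\<forall>c d a. sc (c * d) a = sc c (sc d a)) \<and>
     (\<forall>a. sc 1 a = a) \<and>
     (\<forall>r a. sc (complex_of_real r) a = r *\<^sub>R a) \<and>
     (\<forall>c a b. sc c (a * b) = sc c a * b) \<and>
     (\<forall>c a b. sc c (a * b) = a * sc c b) \<and>
     (\<forall>c a. norm (sc c a) = cmod c * norm a) \<and>
     (\<forall>a. st (st a) = a) \<and>
     (\<forall>a b. st (a + b) = st a + st b) \<and>
     (\<forall>c a. st (sc c a) = sc (cnj c) (st a)) \<and>
     (\<forall>a b. st (a * b) = st b * st a) \<and>
     (\<forall>a. norm (st a * a) = (norm a)\<^sup>2)"

definition spec :: "(complex \<Rightarrow> 'a \<Rightarrow> 'a::ring_1) \<Rightarrow> 'a \<Rightarrow> complex set" where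
  "spec sc a = {z. \<not> (\<exists>b. b * (sc z 1 - a) = 1 \<and> (sc z 1 - a) * b = 1)}"

definition pos :: "('a \<Rightarrow> 'a) \<Rightarrow> (complex \<Rightarrow> 'a \<Rightarrow> 'a::ring_1) \<Rightarrow> 'a \<Rightarrow> bool" where
  "pos st sc a \<longleftrightarrow> st a = a \<and> spec sc a \<subseteq> complex_of_real ` {0..}"

definition alg_le :: "('a \<Rightarrow> 'a) \<Rightarrow> (complex \<Rightarrow> 'a \<Rightarrow> 'a::ring_1) \<Rightarrow> 'a \<Rightarrow> 'a \<Rightarrow> bool" where
  "alg_le st sc a b \<longleftrightarrow> st a = a \<and> st b = b \<and> pos st sc (b - a)"

definition proj :: "('a \<Rightarrow> 'a) \<Rightarrow> 'a::ring_1 \<Rightarrow> bool" where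
  "proj st p \<longleftrightarrow> st p = p \<and> p * p = p"

definition star_subalg :: "('a \<Rightarrow> 'a) \<Rightarrow> (complex \<Rightarrow> 'a \<Rightarrow> 'a::ring_1) \<Rightarrow> 'a set \<Rightarrow> bool" where
  "star_subalg st sc B \<longleftrightarrow> 0 \<in> B \<and> (\<forall>a\<in>B. \<forall>b\<in>B. a + b \<in> B \<and> a * b \<in> B) \<and>
     (\<forall>c. \<forall>a\<in>B. sc c a \<in> B) \<and> (\<forall>a\<in>B. st a \<in> B)"

definition comm_star_subalg :: "('a \<Rightarrow> 'a) \<Rightarrow> (complex \<Rightarrow> 'a \<Rightarrow> 'a::ring_1) \<Rightarrow> 'a set \<Rightarrow> bool" where
  "comm_star_subalg st sc B \<longleftrightarrow> star_subalg st sc B \<and> (\<forall>a\<in>B. \<forall>b\<in>B. a * b = b * a)"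

definition masa :: "('a \<Rightarrow> 'a) \<Rightarrow> (complex \<Rightarrow> 'a \<Rightarrow> 'a::ring_1) \<Rightarrow> 'a set \<Rightarrow> bool" where
  "masa st sc B \<longleftrightarrow> comm_star_subalg st sc B \<and>
     (\<forall>C. comm_star_subalg st sc C \<and> B \<subseteq> C \<longrightarrow> C = B)"

definition gen_cstar :: "('a \<Rightarrow> 'a) \<Rightarrow> (complex \<Rightarrow> 'a \<Rightarrow> 'a::{ring_1,topological_space}) \<Rightarrow> 'a set \<Rightarrow> 'a set" where
  "gen_cstar st sc P = \<Inter>{C. star_subalg st sc C \<and> closed C \<and> P \<subseteq> C}"

definition aw_star :: "('a \<Rightarrow> 'a) \<Rightarrow> (complex \<Rightarrow> 'a \<Rightarrow> 'a::{ring_1,topological_space}) \<Rightarrow> bool" where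
  "aw_star st sc \<longleftrightarrow>
     (\<forall>S. (\<forall>p\<in>S. proj st p) \<and> (\<forall>p\<in>S. \<forall>q\<in>S. p \<noteq> q \<longrightarrow> p * q = 0) \<longrightarrow>
          (\<exists>s. proj st s \<and> (\<forall>p\<in>S. p * s = p) \<and>
               (\<forall>t. proj st t \<and> (\<forall>p\<in>S. p * t = p) \<longrightarrow> s * t = s))) \<and>
     (\<forall>B. masa st sc B \<longrightarrow> B = gen_cstar st sc {p\<in>B. proj st p})"

definition cfunctional :: "(complex \<Rightarrow> 'a \<Rightarrow> 'a::real_normed_vector) \<Rightarrow> ('a \<Rightarrow> complex) \<Rightarrow> bool" where
  "cfunctional sc \<phi> \<longleftrightarrow> (\<forall>x y. \<phi> (x + y) = \<phi> x + \<phi> y) \<and> (\<forall>c x. \<phi> (sc c x) = c * \<phi> x) \<and>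
     (\<exists>K. \<forall>x. cmod (\<phi> x) \<le> K * norm x)"

definition fnorm :: "('a::real_normed_vector \<Rightarrow> complex) \<Rightarrow> real" where
  "fnorm \<phi> = Sup {cmod (\<phi> x) | x. norm x \<le> 1}"

(* W*-algebra (Sakai): the algebra is (isometrically isomorphic to) the dual of a Banach
   space; the predual is realised as a norm-closed subspace P of the dual of A such that
   the canonical map A \<rightarrow> P*, x \<mapsto> (\<phi> \<mapsto> \<phi> x), is isometric and onto. *)
definition w_star :: "('a \<Rightarrow> 'a) \<Rightarrow> (complex \<Rightarrow> 'a \<Rightarrow> 'a::real_normed_algebra_1) \<Rightarrow> bool" where
  "w_star st sc \<longleftrightarrow> (\<exists>P.
     (\<forall>\<phi>\<in>P. cfunctional sc \<phi>) \<and> (\<lambda>_. 0) \<in> P \<and>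
     (\<forall>\<phi>\<in>P. \<forall>\<psi>\<in>P. (\<lambda>x. \<phi> x + \<psi> x) \<in> P) \<and> (\<forall>c. \<forall>\<phi>\<in>P. (\<lambda>x. c * \<phi> x) \<in> P) \<and>
     (\<forall>\<phi> s. cfunctional sc \<phi> \<and> (\<forall>k. s k \<in> P) \<and> (\<lambda>k. fnorm (\<lambda>x. s k x - \<phi> x)) \<longlonglongrightarrow> 0
        \<longrightarrow> \<phi> \<in> P) \<and>
     (\<forall>x. norm x = Sup {cmod (\<phi> x) | \<phi>. \<phi> \<in> P \<and> fnorm \<phi> \<le> 1}) \<and>
     (\<forall>\<Phi>. (\<forall>\<phi>\<in>P. \<forall>\<psi>\<in>P. \<Phi> (\<lambda>x. \<phi> x + \<psi> x) = \<Phi> \<phi> + \<Phi> \<psi>) \<and>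
          (\<forall>c. \<forall>\<phi>\<in>P. \<Phi> (\<lambda>x. c * \<phi> x) = c * \<Phi> \<phi>) \<and>
          (\<exists>K. \<forall>\<phi>\<in>P. cmod (\<Phi> \<phi>) \<le> K * fnorm \<phi>)
        \<longrightarrow> (\<exists>x. \<forall>\<phi>\<in>P. \<Phi> \<phi> = \<phi> x)))"

definition sigma_finite_alg :: "('a::ring_1 \<Rightarrow> 'a) \<Rightarrow> bool" where
  "sigma_finite_alg st \<longleftrightarrow>
     (\<forall>S. (\<forall>p\<in>S. proj st p \<and> p \<noteq> 0) \<and> (\<forall>p\<in>S. \<forall>q\<in>S. p \<noteq> q \<longrightarrow> p * q = 0) \<longrightarrow> countable S)"

definition mnorm :: "('m \<Rightarrow> 'm \<Rightarrow> 'a::real_normed_vector) \<Rightarrow> 'm \<Rightarrow> real" where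
  "mnorm ip x = sqrt (norm (ip x x))"

definition hilbert_module ::
  "('a \<Rightarrow> 'a) \<Rightarrow> (complex \<Rightarrow> 'a \<Rightarrow> 'a::{real_normed_algebra_1,banach,comm_ring_1})
     \<Rightarrow> ('a \<Rightarrow> 'm::ab_group_add \<Rightarrow> 'm) \<Rightarrow> ('m \<Rightarrow> 'm \<Rightarrow> 'a) \<Rightarrow> bool" where
  "hilbert_module st sc act ip \<longleftrightarrow>
     (\<forall>a b x. act (a + b) x = act a x + act b x) \<and>
     (\<forall>a x y. act a (x + y) = act a x + act a y) \<and>
     (\<forall>a b x. act (a * b) x = act a (act b x)) \<and>
     (\<forall>x. act 1 x = x) \<and>
     (\<forall>x y z. ip (x + y) z = ip x z + ip y z) \<and>
     (\<forall>a x y. ip (act a x) y = a * ip x y) \<and>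
     (\<forall>x y. st (ip x y) = ip y x) \<and>
     (\<forall>x. pos st sc (ip x x)) \<and>
     (\<forall>x. ip x x = 0 \<longrightarrow> x = 0) \<and>
     (\<forall>s. (\<forall>e>0. \<exists>N. \<forall>m\<ge>N. \<forall>k\<ge>N. mnorm ip (s m - s k) < e) \<longrightarrow>
          (\<exists>y. (\<lambda>k. mnorm ip (s k - y)) \<longlonglongrightarrow> 0))"

definition has_rank :: "('a \<Rightarrow> 'm \<Rightarrow> 'm::ab_group_add) \<Rightarrow> ('m \<Rightarrow> 'm \<Rightarrow> 'a::ring_1) \<Rightarrow> nat \<Rightarrow> bool" where
  "has_rank act ip d \<longleftrightarrow> (\<exists>\<omega>.
     (\<forall>j\<in>{1..d}. \<forall>k\<in>{1..d}. ip (\<omega> j) (\<omega> k) = (if j = k then 1 else 0)) \<and>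
     (\<forall>x. x = (\<Sum>j=1..d. act (ip x (\<omega> j)) (\<omega> j))))"

definition MFP :: "('m \<Rightarrow> 'm \<Rightarrow> 'a::comm_ring_1) \<Rightarrow> (nat \<Rightarrow> 'm) \<Rightarrow> nat \<Rightarrow> 'a" where
  "MFP ip \<tau> n = (\<Sum>j=1..n. \<Sum>k=1..n. ip (\<tau> j) (\<tau> k) * ip (\<tau> k) (\<tau> j))"

end

theory Submission imports Defs "HOL-Computational_Algebra.Formal_Power_Series" begin

locale cstar =
  fixes st :: "'a::{real_normed_algebra_1,banach,comm_ring_1} \<Rightarrow> 'a"
    and sc :: "complex \<Rightarrow> 'a \<Rightarrow> 'a"
  assumes cs: "cstar_algebra st sc"
begin

lemmas axs = cs[unfolded cstar_algebra_def]

lemma sc_add: "sc (c + d) a = sc c a + sc d a" using axs[THEN conjunct1] by blast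
lemma sc_mult: "sc (c * d) a = sc c (sc d a)" using axs[THEN conjunct2, THEN conjunct2, THEN conjunct1] by blast
lemma sc_one: "sc 1 a = a" using axs[THEN conjunct2, THEN conjunct2, THEN conjunct2, THEN conjunct1] by blast
lemma sc_real: "sc (complex_of_real r) a = r *\<^sub>R a" using axs[THEN conjunct2, THEN conjunct2, THEN conjunct2, THEN conjunct2, THEN conjunct1] by blast
lemma sc_mult_left: "sc c (a * b) = sc c a * b" using axs[THEN conjunct2, THEN conjunct2, THEN conjunct2, THEN conjunct2, THEN conjunct2, THEN conjunct1] by blast
lemma sc_norm: "norm (sc c a) = cmod c * norm a" using axs[THEN conjunct2, THEN conjunct2, THEN conjunct2, THEN conjunct2, THEN conjunct2, THEN conjunct2, THEN conjunct2, THEN conjunct1] by blast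
lemma st_st[simp]: "st (st a) = a" using axs[THEN conjunct2, THEN conjunct2, THEN conjunct2, THEN conjunct2, THEN conjunct2, THEN conjunct2, THEN conjunct2, THEN conjunct2, THEN conjunct1] by blast
lemma st_add: "st (a + b) = st a + st b" using axs[THEN conjunct2, THEN conjunct2, THEN conjunct2, THEN conjunct2, THEN conjunct2, THEN conjunct2, THEN conjunct2, THEN conjunct2, THEN conjunct2, THEN conjunct1] by blast
lemma st_sc: "st (sc c a) = sc (cnj c) (st a)" using axs[THEN conjunct2, THEN conjunct2, THEN conjunct2, THEN conjunct2, THEN conjunct2, THEN conjunct2, THEN conjunct2, THEN conjunct2, THEN conjunct2, THEN conjunct2, THEN conjunct1] by blast
lemma st_mult: "st (a * b) = st b * st a" using axs[THEN conjunct2, THEN conjunct2, THEN conjunct2, THEN conjunct2, THEN conjunct2, THEN conjunct2, THEN conjunct2, THEN conjunct2, THEN conjunct2, THEN conjunct2, THEN conjunct2, THEN conjunct1] by blast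
lemma cstar_id: "norm (st a * a) = (norm a)\<^sup>2" using axs[THEN conjunct2, THEN conjunct2, THEN conjunct2, THEN conjunct2, THEN conjunct2, THEN conjunct2, THEN conjunct2, THEN conjunct2, THEN conjunct2, THEN conjunct2, THEN conjunct2, THEN conjunct2] by blast

definition iota :: "complex \<Rightarrow> 'a" where "iota c = sc c 1"

lemma sc_conv: "sc c a = iota c * a"
  unfolding iota_def using sc_mult_left[of c 1 a] by simp

lemma iota_add: "iota (c + d) = iota c + iota d" unfolding iota_def by (rule sc_add)
lemma iota_mult: "iota (c * d) = iota c * iota d"
  unfolding iota_def sc_mult using sc_mult_left[of c 1 "sc d 1"] by simp
lemma iota_of_real: "iota (complex_of_real r) = of_real r"
  unfolding iota_def sc_real by (simp add: of_real_def)
lemma iota_1[simp]: "iota 1 = 1" unfolding iota_def by (rule sc_one)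
lemma iota_0[simp]: "iota 0 = 0" using iota_of_real[of 0] by simp
lemma iota_minus: "iota (- c) = - iota c"
  using minus_unique[of "iota c" "iota (-c)"] iota_add[of c "-c"] by simp
lemma iota_diff: "iota (c - d) = iota c - iota d"
  using iota_add[of c "-d"] iota_minus[of d] by simp
lemma norm_iota: "norm (iota c) = cmod c" unfolding iota_def by (simp add: sc_norm)
lemma iota_inv: "c \<noteq> 0 \<Longrightarrow> iota c * iota (inverse c) = 1"
  by (simp flip: iota_mult)

lemma st_0[simp]: "st 0 = 0"
  using st_add[of 0 0] by simp
lemma st_1[simp]: "st 1 = 1"
  using st_mult[of "st 1" 1] by simp
lemma st_minus: "st (- a) = - st a"
  using minus_unique[of "st a" "st (-a)"] st_add[of a "-a"] by simp
lemma st_diff: "st (a - b) = st a - st b"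
  using st_add[of a "-b"] st_minus[of b] by simp
lemma st_iota: "st (iota c) = iota (cnj c)"
  unfolding iota_def st_sc by simp
lemma st_scaleR: "st (r *\<^sub>R a) = r *\<^sub>R st a"
  using st_sc[of "complex_of_real r" a] by (simp add: sc_real)
lemma st_of_real: "st (of_real r) = of_real r"
  by (simp add: of_real_def st_scaleR)
lemma st_sum: "st (sum f A) = sum (\<lambda>x. st (f x)) A"
  by (induction A rule: infinite_finite_induct) (auto simp: st_add)
lemma st_mult_comm: "st (a * b) = st a * st b"
  by (simp add: st_mult mult.commute)

lemma norm_st_ge: "norm a \<le> norm (st a)"
proof (cases "a = 0")
  case True then show ?thesis by simp
next
  case False
  have "(norm a)\<^sup>2 \<le> norm (st a) * norm a" using cstar_id[of a] norm_mult_ineq[of "st a" a] by simp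
  then show ?thesis using False by (simp add: power2_eq_square)
qed
lemma norm_st[simp]: "norm (st a) = norm a"
  using norm_st_ge[of a] norm_st_ge[of "st a"] by simp

lemma bl_st: "bounded_linear st"
  by (rule bounded_linear_intro[where K=1]) (auto simp: st_add st_scaleR)

lemma norm_sa_sq: "st h = h \<Longrightarrow> norm (h * h) = (norm h)\<^sup>2"
  using cstar_id[of h] by simp

lemma norm_x_stx: "norm (x * st x) = (norm x)\<^sup>2"
  using cstar_id[of x] by (simp add: mult.commute)

lemma neumann:
  fixes x :: 'a
  assumes "norm x < 1"
  shows "\<exists>b. (1 - x) * b = 1"
proof -
  have s: "summable (\<lambda>n. x ^ n)"
    by (rule summable_comparison_test'[where g="\<lambda>n. norm x ^ n" and N=0])
       (auto intro!: norm_power_ineq summable_geometric assms)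
  have "(\<lambda>n. x ^ n - x ^ Suc n) sums (x ^ 0 - 0)"
    by (rule telescope_sums'[OF LIMSEQ_power_zero[OF assms]])
  then have "(\<lambda>n. (1 - x) * x ^ n) sums 1" by (simp add: algebra_simps)
  moreover have "(\<lambda>n. (1 - x) * x ^ n) sums ((1 - x) * suminf (\<lambda>n. x ^ n))"
    using s by (intro sums_mult summable_sums)
  ultimately show ?thesis using sums_unique2 by blast
qed

lemma spec_iff: "z \<in> spec sc a \<longleftrightarrow> \<not> (\<exists>b. (iota z - a) * b = 1)"
  unfolding spec_def iota_def by (auto simp: mult.commute)

lemma inv_outside:
  assumes "norm a < cmod z"
  shows "\<exists>b. (iota z - a) * b = 1"
proof -
  have z: "z \<noteq> 0" using assms by auto
  let ?x = "iota (inverse z) * a"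
  have "norm ?x \<le> cmod (inverse z) * norm a"
    using norm_mult_ineq[of "iota (inverse z)" a] by (simp add: norm_iota)
  also have "\<dots> = norm a / cmod z" by (simp add: norm_inverse divide_inverse mult.commute)
  also have "\<dots> < 1" using assms z by (simp add: divide_less_eq)
  finally obtain b0 where b0: "(1 - ?x) * b0 = 1" using neumann by blast
  have "iota z * (1 - ?x) = iota z - (iota z * iota (inverse z)) * a"
    by (simp add: right_diff_distrib mult.assoc)
  then have "iota z - a = iota z * (1 - ?x)"
    using iota_inv[OF z] by simp
  then have "(iota z - a) * (iota (inverse z) * b0) = (iota z * iota (inverse z)) * ((1 - ?x) * b0)"
    by (simp add: ac_simps)
  also have "\<dots> = 1" using b0 iota_inv[OF z] by simp
  finally show ?thesis by blast
qed

lemma spec_bound: "z \<in> spec sc a \<Longrightarrow> cmod z \<le> norm a"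
  using inv_outside[of a z] spec_iff by force

lemma sa_shift: "(h + iota (- c)) * (h + iota c) = h * h + iota (- c * c)"
  by (simp add: iota_minus iota_mult algebra_simps)

lemma spec_sa_real:
  assumes h: "st h = h" and z: "z \<in> spec sc h"
  shows "Im z = 0"
proof (rule ccontr)
  assume nz: "Im z \<noteq> 0"
  define s where "s = ((norm h)\<^sup>2 + 1) / (2 * Im z)"
  define p where "p = h + iota (\<i> * complex_of_real s)"
  have "iota (z + \<i> * complex_of_real s) - p = iota z - h"
    unfolding p_def by (simp add: iota_add)
  then have "z + \<i> * complex_of_real s \<in> spec sc p" using z spec_iff by simp
  then have c: "cmod (z + \<i> * complex_of_real s) \<le> norm p" by (rule spec_bound)
  have stp: "st p = h + iota (- (\<i> * complex_of_real s))"
    unfolding p_def by (simp add: st_add h st_iota)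
  have "st p * p = h * h + iota (- (\<i> * complex_of_real s) * (\<i> * complex_of_real s))"
    unfolding stp unfolding p_def by (rule sa_shift)
  also have "- (\<i> * complex_of_real s) * (\<i> * complex_of_real s) = complex_of_real (s\<^sup>2)"
    by (simp add: power2_eq_square algebra_simps)
  finally have eq: "st p * p = h * h + of_real (s\<^sup>2)" by (simp only: iota_of_real)
  have ns: "norm (of_real (s\<^sup>2) :: 'a) = s\<^sup>2" by (simp only: norm_of_real abs_power2)
  have "(norm p)\<^sup>2 = norm (st p * p)" by (rule cstar_id[symmetric])
  also have "\<dots> = norm (h * h + of_real (s\<^sup>2))" by (simp only: eq)
  also have "\<dots> \<le> norm (h * h) + norm (of_real (s\<^sup>2) :: 'a)" by (rule norm_triangle_ineq)
  also have "\<dots> \<le> (norm h)\<^sup>2 + s\<^sup>2"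
    using norm_mult_ineq[of h h] ns by (simp add: power2_eq_square)
  finally have np: "(norm p)\<^sup>2 \<le> (norm h)\<^sup>2 + s\<^sup>2" .
  have "(cmod (z + \<i> * complex_of_real s))\<^sup>2 \<le> (norm p)\<^sup>2"
    using c by (intro power_mono) auto
  moreover have "(cmod (z + \<i> * complex_of_real s))\<^sup>2 = (Re z)\<^sup>2 + (Im z + s)\<^sup>2"
    by (simp add: cmod_power2)
  ultimately have "(Re z)\<^sup>2 + (Im z + s)\<^sup>2 \<le> (norm h)\<^sup>2 + s\<^sup>2" using np by linarith
  then have "(Re z)\<^sup>2 + (Im z)\<^sup>2 + 2 * Im z * s \<le> (norm h)\<^sup>2" by (simp add: power2_eq_square algebra_simps)
  moreover have "2 * Im z * s = (norm h)\<^sup>2 + 1" unfolding s_def using nz by simp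
  ultimately show False using zero_le_power2[of "Re z"] zero_le_power2[of "Im z"] by linarith
qed


end

definition cf :: "nat \<Rightarrow> real" where "cf n = ((1/2::real) gchoose n) * (-1) ^ n"

lemma g_rec: "of_nat (Suc k) * ((a::real) gchoose Suc k) = (a - of_nat k) * (a gchoose k)"
  using gbinomial_absorption[of k a] gbinomial_absorb_comp[of a k] by simp

lemma abs_cf: "\<bar>cf n\<bar> = \<bar>(1/2::real) gchoose n\<bar>"
  unfolding cf_def by (simp add: abs_mult)

lemma u_rec: "real (Suc (Suc N)) * \<bar>(1/2::real) gchoose Suc (Suc N)\<bar> = (real N + 1/2) * \<bar>(1/2::real) gchoose Suc N\<bar>"
proof -
  have "real (Suc (Suc N)) * \<bar>(1/2::real) gchoose Suc (Suc N)\<bar> = \<bar>of_nat (Suc (Suc N)) * ((1/2::real) gchoose Suc (Suc N))\<bar>"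
    by (simp add: abs_mult)
  also have "\<dots> = \<bar>(1/2 - of_nat (Suc N)) * ((1/2::real) gchoose Suc N)\<bar>" by (simp only: g_rec)
  also have "\<dots> = (real N + 1/2) * \<bar>(1/2::real) gchoose Suc N\<bar>" by (simp add: abs_mult)
  finally show ?thesis .
qed

lemma u_sum: "(\<Sum>n<Suc N. \<bar>(1/2::real) gchoose n\<bar>) = 2 - 2 * real (Suc N) * \<bar>(1/2::real) gchoose Suc N\<bar>"
proof (induction N)
  case 0
  then show ?case by simp
next
  case (Suc N)
  have "(\<Sum>n<Suc (Suc N). \<bar>(1/2::real) gchoose n\<bar>) = 2 - 2 * real (Suc N) * \<bar>(1/2::real) gchoose Suc N\<bar> + \<bar>(1/2::real) gchoose Suc N\<bar>"
    using Suc by simp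
  also have "\<dots> = 2 - 2 * ((real N + 1/2) * \<bar>(1/2::real) gchoose Suc N\<bar>)" by (simp add: algebra_simps)
  also have "\<dots> = 2 - 2 * (real (Suc (Suc N)) * \<bar>(1/2::real) gchoose Suc (Suc N)\<bar>)" by (simp only: u_rec)
  finally show ?case by simp
qed

lemma summable_abs_cf: "summable (\<lambda>n. \<bar>cf n\<bar>)"
proof (rule summableI_nonneg_bounded[where x=2])
  fix m show "(\<Sum>i<m. \<bar>cf i\<bar>) \<le> 2"
  proof (cases m)
    case 0 then show ?thesis by simp
  next
    case (Suc N)
    then show ?thesis unfolding abs_cf using u_sum[of N] by simp
  qed
qed simp

lemma cf_conv: "(\<Sum>i\<le>k. cf i * cf (k - i)) = (-1) ^ k * real (1 choose k)"
proof -
  have "(\<Sum>i\<le>k. cf i * cf (k - i)) = (\<Sum>i\<le>k. (-1) ^ k * (((1/2::real) gchoose i) * ((1/2) gchoose (k - i))))"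
    unfolding cf_def by (intro sum.cong refl) (simp add: power_add[symmetric] algebra_simps)
  also have "\<dots> = (-1) ^ k * (\<Sum>i=0..k. ((1/2::real) gchoose i) * ((1/2) gchoose (k - i)))"
    by (simp add: sum_distrib_left atLeast0AtMost)
  also have "\<dots> = (-1) ^ k * ((1/2 + 1/2::real) gchoose k)" by (simp only: gbinomial_Vandermonde)
  also have "(1/2 + 1/2::real) gchoose k = real (1 choose k)" using binomial_gbinomial[where 'a=real, of 1 k] by simp
  finally show ?thesis .
qed

context cstar
begin

lemma st_power: "st (a ^ n) = st a ^ n"
  by (induction n) (auto simp: st_mult_comm)

lemma sqrt_exists:
  assumes w: "st w = w" "norm w \<le> 1"
  shows "\<exists>f. st f = f \<and> f * f = 1 - w"
proof -
  define X where "X n = cf n *\<^sub>R w ^ n" for n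
  have nX: "norm (X n) \<le> \<bar>cf n\<bar>" for n
  proof -
    have "norm (w ^ n) \<le> 1" using order_trans[OF norm_power_ineq[of w n] power_le_one[OF norm_ge_zero w(2)]] .
    then show ?thesis unfolding X_def by (simp add: mult_left_le)
  qed
  have sX: "summable (\<lambda>n. norm (X n))"
    by (rule summable_comparison_test'[OF summable_abs_cf, where N=0]) (simp add: nX)
  define f where "f = suminf X"
  have "(\<lambda>k. \<Sum>i\<le>k. X i * X (k - i)) sums (f * f)"
    unfolding f_def by (rule Cauchy_product_sums[OF sX sX])
  moreover have "(\<Sum>i\<le>k. X i * X (k - i)) = ((-1) ^ k * real (1 choose k)) *\<^sub>R w ^ k" for k
  proof -
    have "(\<Sum>i\<le>k. X i * X (k - i)) = (\<Sum>i\<le>k. (cf i * cf (k - i)) *\<^sub>R w ^ k)"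
      unfolding X_def by (intro sum.cong refl) (simp add: power_add[symmetric])
    also have "\<dots> = (\<Sum>i\<le>k. cf i * cf (k - i)) *\<^sub>R w ^ k" by (simp add: scaleR_sum_left)
    finally show ?thesis by (simp only: cf_conv)
  qed
  ultimately have s1: "(\<lambda>k. ((-1) ^ k * real (1 choose k)) *\<^sub>R w ^ k) sums (f * f)" by simp
  have eqt: "(\<lambda>k. ((-1) ^ k * real (1 choose k)) *\<^sub>R w ^ k) =
      (\<lambda>k. (if k = 0 then 1 else 0) + (if k = 1 then - w else 0))"
  proof
    fix k show "((-1) ^ k * real (1 choose k)) *\<^sub>R w ^ k = (if k = 0 then 1 else 0) + (if k = 1 then - w else 0)"
    proof (cases "k \<le> 1")
      case True then have "k = 0 \<or> k = 1" by auto
      then show ?thesis by auto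
    next
      case False then show ?thesis by (simp add: binomial_eq_0)
    qed
  qed
  have s2: "(\<lambda>k. (if k = 0 then 1 else 0) + (if k = 1 then - w else 0)) sums (1 + - w)"
    by (intro sums_add sums_single)
  have ff: "f * f = 1 - w" using s1 s2 eqt sums_unique2 by fastforce
  have sm: "summable X" using sX summable_norm_cancel by blast
  have "st f = (\<Sum>n. st (X n))" unfolding f_def by (rule bounded_linear.suminf[OF bl_st sm])
  also have "(\<lambda>n. st (X n)) = X" unfolding X_def by (auto simp: st_scaleR st_power w(1))
  finally have "st f = f" unfolding f_def .
  then show ?thesis using ff by blast
qed

lemma inv_sa:
  assumes "st P = P" "P * u = 1"
  shows "st u = u"
proof -
  have "st u * P = 1" using arg_cong[OF assms(2), of st] assms(1) by (simp add: st_mult)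
  have "st u = st u * (P * u)" using assms(2) by simp
  also have "\<dots> = (st u * P) * u" by (simp add: mult.assoc)
  also have "\<dots> = u" using \<open>st u * P = 1\<close> by simp
  finally show ?thesis .
qed

lemma spec_norm:
  assumes h: "st h = h" and r: "r \<ge> 0" and sp: "\<forall>z\<in>spec sc h. cmod z \<le> r"
  shows "norm h \<le> r"
proof (rule ccontr)
  assume "\<not> norm h \<le> r"
  then have Nr: "norm h > r" by simp
  define N where "N = norm h"
  have N0: "N > 0" using Nr r unfolding N_def by linarith
  define k where "k = h * h"
  have nk: "norm k = N\<^sup>2" unfolding k_def N_def using norm_sa_sq[OF h] .
  define w where "w = (1 / N\<^sup>2) *\<^sub>R k"
  have stw: "st w = w" unfolding w_def k_def by (simp add: st_scaleR st_mult h)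
  have nw: "norm w \<le> 1" unfolding w_def using nk N0 by simp
  obtain f where f: "st f = f" "f * f = 1 - w" using sqrt_exists[OF stw nw] by blast
  define F where "F = N *\<^sub>R f"
  have stF: "st F = F" unfolding F_def by (simp add: st_scaleR f)
  have FF: "F * F = of_real (N\<^sup>2) - k"
  proof -
    have "F * F = (N\<^sup>2) *\<^sub>R (f * f)" unfolding F_def by (simp add: power2_eq_square)
    also have "\<dots> = (N\<^sup>2) *\<^sub>R 1 - (N\<^sup>2 * (1 / N\<^sup>2)) *\<^sub>R k" unfolding f w_def by (simp add: scaleR_diff_right)
    also have "\<dots> = of_real (N\<^sup>2) - k" using N0 by (simp add: of_real_def)
    finally show ?thesis .
  qed
  have "complex_of_real N \<notin> spec sc h" using sp Nr unfolding N_def by force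
  then obtain b1 where b1: "(iota (complex_of_real N) - h) * b1 = 1" using spec_iff by blast
  have "complex_of_real (- N) \<notin> spec sc h" using sp Nr unfolding N_def by force
  then obtain b2 where b2: "(iota (complex_of_real (- N)) - h) * b2 = 1" using spec_iff by blast
  have "(iota (complex_of_real N) - h) * (iota (complex_of_real (- N)) - h) = - (F * F)"
    unfolding FF k_def iota_of_real by (simp add: algebra_simps power2_eq_square)
  then have "(F * F) * (- (b1 * b2)) = 1"
    using b1 b2 by (metis (no_types, lifting) minus_mult_commute mult.assoc mult.left_commute mult_1_right)
  then obtain u where u: "(F * F) * u = 1" by blast
  have stu: "st u = u" using inv_sa[OF _ u] stF by (simp add: st_mult)
  define g where "g = F * u"
  have Fg: "F * g = 1" unfolding g_def using u by (simp add: mult.assoc)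
  have stg: "st g = g" unfolding g_def by (simp add: st_mult_comm stF stu)
  define M where "M = norm (g * g) + 2 / N\<^sup>2"
  have M0: "M > 0" unfolding M_def using N0 by (simp add: add_nonneg_pos)
  have MN: "1 / M < N\<^sup>2"
  proof -
    have "M \<ge> 2 / N\<^sup>2" unfolding M_def by simp
    then have "1 / M \<le> 1 / (2 / N\<^sup>2)" using N0 M0 by (intro divide_left_mono) (auto intro!: divide_pos_pos)
    also have "\<dots> = N\<^sup>2 / 2" by simp
    also have "\<dots> < N\<^sup>2" using N0 by simp
    finally show ?thesis .
  qed
  define w' where "w' = (1 / M) *\<^sub>R (g * g)"
  have stw': "st w' = w'" unfolding w'_def by (simp add: st_scaleR st_mult stg)
  have gM: "norm (g * g) \<le> M" unfolding M_def using N0 by simp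
  have nw': "norm w' \<le> 1" unfolding w'_def using M0 gM by (simp add: field_simps)
  obtain e where e: "st e = e" "e * e = 1 - w'" using sqrt_exists[OF stw' nw'] by blast
  define q where "q = F * e"
  have stq: "st q = q" unfolding q_def by (simp add: st_mult_comm stF e)
  have qq: "q * q = F * F - of_real (1 / M)"
  proof -
    have "q * q = F * F * (e * e)" unfolding q_def by (simp add: ac_simps)
    also have "\<dots> = F * F - (1 / M) *\<^sub>R ((F * g) * (F * g))" unfolding e w'_def
      by (simp add: algebra_simps)
    also have "\<dots> = F * F - of_real (1 / M)" using Fg by (simp add: of_real_def)
    finally show ?thesis .
  qed
  have hq: "h * h + q * q = of_real (N\<^sup>2 - 1 / M)"
    unfolding qq FF k_def by (simp add: of_real_diff)
  define x where "x = h + iota \<i> * q"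
  have stx: "st x = h - iota \<i> * q"
    unfolding x_def by (simp add: st_add h st_mult_comm st_iota stq iota_minus)
  have ii: "iota \<i> * iota \<i> = - 1" by (simp flip: iota_mult add: iota_minus)
  have "x * st x = (h + iota \<i> * q) * (h - iota \<i> * q)"
    unfolding stx by (simp only: x_def)
  also have "\<dots> = h * h - (iota \<i> * iota \<i>) * (q * q)"
    by (simp add: algebra_simps)
  also have "\<dots> = h * h + q * q" unfolding ii by simp
  finally have xx: "x * st x = of_real (N\<^sup>2 - 1 / M)" using hq by simp
  have "(norm x)\<^sup>2 = norm (x * st x)" by (simp only: norm_x_stx)
  also have "\<dots> = norm (of_real (N\<^sup>2 - 1 / M) :: 'a)" by (simp only: xx)
  also have "\<dots> = \<bar>N\<^sup>2 - 1 / M\<bar>" by (rule norm_of_real)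
  also have "\<dots> = N\<^sup>2 - 1 / M" using MN by simp
  finally have nx: "(norm x)\<^sup>2 = N\<^sup>2 - 1 / M" .
  have "x + st x = 2 *\<^sub>R h" unfolding stx unfolding x_def by (simp add: scaleR_2)
  then have "2 * N \<le> norm x + norm (st x)" unfolding N_def
    using norm_triangle_ineq[of x "st x"] by simp
  then have "N \<le> norm x" by simp
  then have "N\<^sup>2 \<le> (norm x)\<^sup>2" using N0 by (intro power_mono) auto
  then show False using nx M0 by simp
qed

end

lemma sq_diff_sum:
  fixes x :: "nat \<Rightarrow> 'b::comm_ring_1"
  shows "(\<Sum>l\<in>A. \<Sum>m\<in>A. (x l - x m) * (x l - x m)) =
    2 * of_nat (card A) * (\<Sum>l\<in>A. x l * x l) - 2 * ((\<Sum>l\<in>A. x l) * (\<Sum>l\<in>A. x l))"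
proof -
  have "(\<Sum>l\<in>A. \<Sum>m\<in>A. (x l - x m) * (x l - x m)) =
     (\<Sum>l\<in>A. \<Sum>m\<in>A. x l * x l) + (\<Sum>l\<in>A. \<Sum>m\<in>A. x m * x m) - 2 * (\<Sum>l\<in>A. \<Sum>m\<in>A. x l * x m)"
    by (simp add: algebra_simps sum.distrib sum_subtractf sum_distrib_left)
  also have "(\<Sum>l\<in>A. \<Sum>m\<in>A. x l * x l) = of_nat (card A) * (\<Sum>l\<in>A. x l * x l)"
    by (simp add: sum_distrib_left)
  also have "(\<Sum>l\<in>A. \<Sum>m\<in>A. x m * x m) = of_nat (card A) * (\<Sum>l\<in>A. x l * x l)"
    by simp
  also have "(\<Sum>l\<in>A. \<Sum>m\<in>A. x l * x m) = (\<Sum>l\<in>A. x l) * (\<Sum>l\<in>A. x l)"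
    by (simp add: sum_product)
  finally show ?thesis by (simp add: algebra_simps)
qed

context cstar
begin

definition Kc :: "'a \<Rightarrow> bool" where
  "Kc a \<longleftrightarrow> st a = a \<and> (\<exists>t\<ge>0. norm (of_real t - a) \<le> t)"

lemma K_0: "Kc 0" unfolding Kc_def by auto

lemma K_add: assumes "Kc a" "Kc b" shows "Kc (a + b)"
proof -
  obtain s t where s: "s \<ge> 0" "norm (of_real s - a) \<le> s" and t: "t \<ge> 0" "norm (of_real t - b) \<le> t"
    and sa: "st a = a" "st b = b" using assms unfolding Kc_def by blast
  have "norm (of_real (s + t) - (a + b)) = norm ((of_real s - a) + (of_real t - b))"
    by (simp add: algebra_simps)
  also have "\<dots> \<le> s + t" using norm_triangle_ineq[of "of_real s - a" "of_real t - b"] s t by linarith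
  finally show ?thesis unfolding Kc_def using s t sa by (auto simp: st_add intro!: exI[of _ "s + t"])
qed

lemma K_scale: assumes "Kc a" "c \<ge> 0" shows "Kc (c *\<^sub>R a)"
proof -
  obtain s where s: "s \<ge> 0" "norm (of_real s - a) \<le> s" and sa: "st a = a"
    using assms unfolding Kc_def by blast
  have "norm (of_real (c * s) - c *\<^sub>R a) = norm (c *\<^sub>R (of_real s - a))"
    by (simp add: scaleR_diff_right of_real_def)
  also have "\<dots> \<le> c * s" using s assms(2) by (simp add: mult_left_mono)
  finally show ?thesis unfolding Kc_def using s sa assms(2) by (auto simp: st_scaleR intro!: exI[of _ "c * s"])
qed

lemma K_sum: "(\<And>i. i \<in> A \<Longrightarrow> Kc (f i)) \<Longrightarrow> Kc (sum f A)"
  by (induction A rule: infinite_finite_induct) (auto simp: K_0 K_add)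

lemma spec_shift:
  assumes "z \<in> spec sc (of_real t - a)"
  shows "complex_of_real t - z \<in> spec sc a"
proof -
  have e: "iota z - (of_real t - a) = - (iota (complex_of_real t - z) - a)"
    by (simp add: iota_diff iota_of_real)
  show ?thesis
  proof (rule ccontr)
    assume "complex_of_real t - z \<notin> spec sc a"
    then obtain b where "(iota (complex_of_real t - z) - a) * b = 1" using spec_iff by blast
    then have "(iota z - (of_real t - a)) * (- b) = 1" unfolding e by (simp only: minus_mult_minus)
    then show False using assms spec_iff by blast
  qed
qed

lemma K_pos: assumes "Kc a" shows "pos st sc a"
proof -
  obtain t where t: "t \<ge> 0" "norm (of_real t - a) \<le> t" and sa: "st a = a"
    using assms unfolding Kc_def by blast
  have "z \<in> complex_of_real ` {0..}" if z: "z \<in> spec sc a" for z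
  proof -
    have "of_real t - (of_real t - a) = a" by simp
    then have z': "z \<in> spec sc (of_real t - (of_real t - a))" using z by simp
    have "complex_of_real t - z \<in> spec sc (of_real t - a)" by (rule spec_shift[OF z'])
    moreover have "st (of_real t - a) = of_real t - a" by (simp add: st_diff st_of_real sa)
    ultimately have im: "Im (complex_of_real t - z) = 0" and
      cm: "cmod (complex_of_real t - z) \<le> norm (of_real t - a)"
      using spec_sa_real spec_bound by blast+
    have imz: "Im z = 0" using im by simp
    have "\<bar>t - Re z\<bar> \<le> t" using cm t(2) imz by (simp add: cmod_eq_Re)
    then have "Re z \<ge> 0" by linarith
    moreover have "z = complex_of_real (Re z)" using imz by (simp add: complex_eq_iff)
    ultimately show ?thesis by auto
  qed
  then show ?thesis unfolding pos_def using sa by auto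
qed

lemma spec_sq:
  assumes y: "st y = y" and z: "z \<in> spec sc (y * y)"
  shows "Im z = 0 \<and> Re z \<ge> 0"
proof -
  define w where "w = csqrt z"
  have ww: "w * w = z" unfolding w_def using power2_csqrt[of z] by (simp add: power2_eq_square)
  have fac: "iota z - y * y = (iota w - y) * (- (iota (- w) - y))"
    unfolding ww[symmetric] by (simp add: iota_mult iota_minus algebra_simps)
  have "w \<in> spec sc y \<or> - w \<in> spec sc y"
  proof (rule ccontr)
    assume "\<not> (w \<in> spec sc y \<or> - w \<in> spec sc y)"
    then obtain b1 b2 where b1: "(iota w - y) * b1 = 1" and b2: "(iota (- w) - y) * b2 = 1"
      using spec_iff by blast
    have "(iota z - y * y) * (- (b1 * b2)) = ((iota w - y) * b1) * ((iota (- w) - y) * b2)"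
      unfolding fac by (simp add: algebra_simps)
    then have "(iota z - y * y) * (- (b1 * b2)) = 1" using b1 b2 by simp
    then show False using z spec_iff by blast
  qed
  then have "Im w = 0" using spec_sa_real[OF y] by fastforce
  then have "w = complex_of_real (Re w)" by (simp add: complex_eq_iff)
  then have "z = complex_of_real (Re w * Re w)" using ww by (metis of_real_mult)
  then show ?thesis by simp
qed

lemma K_sq: assumes y: "st y = y" shows "Kc (y * y)"
proof -
  define t where "t = norm (y * y)"
  have t0: "t \<ge> 0" unfolding t_def by simp
  have sh: "st (of_real t - y * y) = of_real t - y * y" by (simp add: st_diff st_of_real st_mult y)
  have "norm (of_real t - y * y) \<le> t"
  proof (rule spec_norm[OF sh t0], rule ballI)
    fix z assume z: "z \<in> spec sc (of_real t - y * y)"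
    then have z2: "complex_of_real t - z \<in> spec sc (y * y)" by (rule spec_shift)
    from spec_sq[OF y z2] have a: "Im z = 0" "Re z \<le> t" by auto
    from spec_bound[OF z2] have "cmod (complex_of_real t - z) \<le> t" unfolding t_def .
    then have "\<bar>t - Re z\<bar> \<le> t" using a by (simp add: cmod_eq_Re)
    then have "\<bar>Re z\<bar> \<le> t" using a by linarith
    then show "cmod z \<le> t" using a by (simp add: cmod_eq_Re)
  qed
  then show ?thesis unfolding Kc_def using t0 by (auto simp: st_mult y)
qed

lemma i4: "iota 4 = 4" using iota_of_real[of 4] by simp

lemma K_xx: "Kc (x * st x)"
proof -
  define y where "y = iota (1/2) * (x + st x)"
  define z where "z = iota (- \<i> / 2) * (x - st x)"
  have sty: "st y = y" unfolding y_def by (simp add: st_mult_comm st_iota st_add add.commute)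
  have "st z = iota (\<i> / 2) * (st x - x)" unfolding z_def by (simp add: st_mult_comm st_iota st_diff)
  also have "\<dots> = z" unfolding z_def
    using iota_minus[of "\<i> / 2"] by (simp add: algebra_simps)
  finally have stz: "st z = z" .
  have h1: "iota (1/2) * iota (1/2) = iota (1/4)" by (simp flip: iota_mult)
  have h2: "iota (- \<i> / 2) * iota (- \<i> / 2) = - iota (1/4)" by (simp add: iota_minus flip: iota_mult)
  have "y * y + z * z = (iota (1/2) * iota (1/2)) * ((x + st x) * (x + st x)) +
      (iota (- \<i> / 2) * iota (- \<i> / 2)) * ((x - st x) * (x - st x))"
    unfolding y_def z_def by (simp add: ac_simps)
  also have "\<dots> = iota (1/4) * ((x + st x) * (x + st x) - (x - st x) * (x - st x))"
    unfolding h1 h2 by (simp add: algebra_simps)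
  also have "(x + st x) * (x + st x) - (x - st x) * (x - st x) = iota 4 * (x * st x)"
    unfolding i4 by (simp add: algebra_simps)
  also have "iota (1/4) * (iota 4 * (x * st x)) = (iota (1/4) * iota 4) * (x * st x)"
    by (simp add: mult.assoc)
  also have "iota (1/4) * iota 4 = 1" by (simp flip: iota_mult)
  finally have "x * st x = y * y + z * z" by simp
  then show ?thesis using K_add[OF K_sq[OF sty] K_sq[OF stz]] by simp
qed

lemma K_norm:
  assumes a: "Kc a" and b: "Kc (of_real c - a)" and c: "c \<ge> 0"
  shows "norm a \<le> c"
proof -
  have sa: "st a = a" using a unfolding Kc_def by blast
  show ?thesis
  proof (rule spec_norm[OF sa c], rule ballI)
    fix z assume z: "z \<in> spec sc a"
    from K_pos[OF a] z obtain r where r: "z = complex_of_real r" "r \<ge> 0"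
      unfolding pos_def by auto
    have "of_real c - (of_real c - a) = a" by simp
    then have z': "z \<in> spec sc (of_real c - (of_real c - a))" using z by simp
    have "complex_of_real c - z \<in> spec sc (of_real c - a)" by (rule spec_shift[OF z'])
    with K_pos[OF b] obtain r' where "complex_of_real c - z = complex_of_real r'" "r' \<ge> 0"
      unfolding pos_def by auto
    then have "c - r \<ge> 0" using r by (metis of_real_diff of_real_eq_iff)
    then show "cmod z \<le> c" using r by simp
  qed
qed

end

lemma swap4:
  fixes T :: "'i \<Rightarrow> 'i \<Rightarrow> 'l \<Rightarrow> 'l \<Rightarrow> 'b::comm_monoid_add"
  shows "(\<Sum>j\<in>J. \<Sum>k\<in>J. \<Sum>l\<in>L. \<Sum>m\<in>L. T j k l m) = (\<Sum>l\<in>L. \<Sum>m\<in>L. \<Sum>j\<in>J. \<Sum>k\<in>J. T j k l m)"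
proof -
  have "(\<Sum>j\<in>J. \<Sum>k\<in>J. \<Sum>l\<in>L. \<Sum>m\<in>L. T j k l m) = (\<Sum>j\<in>J. \<Sum>l\<in>L. \<Sum>k\<in>J. \<Sum>m\<in>L. T j k l m)"
    by (rule sum.cong[OF refl], rule sum.swap)
  also have "\<dots> = (\<Sum>l\<in>L. \<Sum>j\<in>J. \<Sum>k\<in>J. \<Sum>m\<in>L. T j k l m)" by (rule sum.swap)
  also have "\<dots> = (\<Sum>l\<in>L. \<Sum>j\<in>J. \<Sum>m\<in>L. \<Sum>k\<in>J. T j k l m)"
    by (rule sum.cong[OF refl], rule sum.cong[OF refl], rule sum.swap)
  also have "\<dots> = (\<Sum>l\<in>L. \<Sum>m\<in>L. \<Sum>j\<in>J. \<Sum>k\<in>J. T j k l m)"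
    by (rule sum.cong[OF refl], rule sum.swap)
  finally show ?thesis .
qed

lemma (in cstar) MH_gen:
  "(\<Sum>j\<in>J. \<Sum>k\<in>J. (\<Sum>l\<in>L. a j l * st (a k l)) * (\<Sum>m\<in>L. a k m * st (a j m))) =
   (\<Sum>l\<in>L. \<Sum>m\<in>L. (\<Sum>j\<in>J. a j l * st (a j m)) * (\<Sum>k\<in>J. a k m * st (a k l)))"
proof -
  have "(\<Sum>j\<in>J. \<Sum>k\<in>J. (\<Sum>l\<in>L. a j l * st (a k l)) * (\<Sum>m\<in>L. a k m * st (a j m))) =
     (\<Sum>j\<in>J. \<Sum>k\<in>J. \<Sum>l\<in>L. \<Sum>m\<in>L. (a j l * st (a k l)) * (a k m * st (a j m)))"
    by (simp only: sum_product)
  also have "\<dots> = (\<Sum>l\<in>L. \<Sum>m\<in>L. \<Sum>j\<in>J. \<Sum>k\<in>J. (a j l * st (a k l)) * (a k m * st (a j m)))"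
    by (rule swap4)
  also have "\<dots> = (\<Sum>l\<in>L. \<Sum>m\<in>L. \<Sum>j\<in>J. \<Sum>k\<in>J. (a j l * st (a j m)) * (a k m * st (a k l)))"
    by (intro sum.cong refl) (simp only: ac_simps)
  also have "\<dots> = (\<Sum>l\<in>L. \<Sum>m\<in>L. (\<Sum>j\<in>J. a j l * st (a j m)) * (\<Sum>k\<in>J. a k m * st (a k l)))"
    by (simp only: sum_product)
  finally show ?thesis .
qed

lemma final_alg:
  fixes M OD S2 SS :: "'a::{real_normed_algebra_1,comm_ring_1}"
  assumes M: "M = OD + S2" and sq: "SS = 2 * of_nat d * S2 - 2 * (of_nat n * of_nat n)"
    and cc1: "of_real (1 / (2 * real d)) * (2 * of_nat d) = (1::'a)"
    and cc2: "of_real (1 / (2 * real d)) * (2 * (of_nat n * of_nat n)) = (of_real ((real n)\<^sup>2 / real d) :: 'a)"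
  shows "M - of_real ((real n)\<^sup>2 / real d) = OD + (1 / (2 * real d)) *\<^sub>R SS"
proof -
  have "(1 / (2 * real d)) *\<^sub>R SS = of_real (1 / (2 * real d)) * (2 * of_nat d * S2) - of_real (1 / (2 * real d)) * (2 * (of_nat n * of_nat n))"
    unfolding scaleR_conv_of_real sq by (rule right_diff_distrib)
  also have "\<dots> = (of_real (1 / (2 * real d)) * (2 * of_nat d)) * S2 - of_real ((real n)\<^sup>2 / real d)"
    unfolding cc2 by (simp only: mult.assoc)
  also have "\<dots> = S2 - of_real ((real n)\<^sup>2 / real d)" unfolding cc1 by simp
  finally show ?thesis unfolding M by simp
qed

lemma lag_alg: "(1::'b::comm_ring_1) * 1 - g * s - s * g + 1 * 1 = 2 * (1 - g * s)"
  by (simp add: algebra_simps)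

theorem proposition3p4:
  fixes st :: "'a::{real_normed_algebra_1,banach,comm_ring_1} \<Rightarrow> 'a"
    and sc :: "complex \<Rightarrow> 'a \<Rightarrow> 'a"
    and act :: "'a \<Rightarrow> 'm::ab_group_add \<Rightarrow> 'm"
    and ip :: "'m \<Rightarrow> 'm \<Rightarrow> 'a"
    and d n :: nat
    and \<tau> :: "nat \<Rightarrow> 'm"
  assumes "cstar_algebra st sc"
    and "(w_star st sc \<and> sigma_finite_alg st) \<or> aw_star st sc"
    and "hilbert_module st sc act ip"
    and "has_rank act ip d"
    and "\<forall>j\<in>{1..n}. ip (\<tau> j) (\<tau> j) = 1"
  shows "norm (MFP ip \<tau> n) \<le> (real n)\<^sup>2
       \<and> alg_le st sc (MFP ip \<tau> n) (of_real (norm (MFP ip \<tau> n)))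
       \<and> alg_le st sc (of_real ((real n)\<^sup>2 / real d)) (MFP ip \<tau> n)"
proof -
  interpret cstar st sc by (rule cstar.intro) (rule assms(1))
  note HM = assms(3)[unfolded hilbert_module_def]
  have ip_add: "\<And>x y z. ip (x + y) z = ip x z + ip y z"
    using HM[THEN conjunct2, THEN conjunct2, THEN conjunct2, THEN conjunct2, THEN conjunct1] by blast
  have ip_act: "\<And>a x y. ip (act a x) y = a * ip x y"
    using HM[THEN conjunct2, THEN conjunct2, THEN conjunct2, THEN conjunct2, THEN conjunct2, THEN conjunct1] by blast
  have ip_st: "\<And>x y. st (ip x y) = ip y x"
    using HM[THEN conjunct2, THEN conjunct2, THEN conjunct2, THEN conjunct2, THEN conjunct2, THEN conjunct2, THEN conjunct1] by blast
  obtain \<omega> where ex: "\<And>x. x = (\<Sum>j=1..d. act (ip x (\<omega> j)) (\<omega> j))"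
    using assms(4) unfolding has_rank_def by blast
  have ip0: "ip 0 y = 0" for y using ip_add[of 0 0 y] by simp
  have ip_sum: "ip (sum f A) y = (\<Sum>i\<in>A. ip (f i) y)" for f :: "nat \<Rightarrow> 'm" and A y
    by (induction A rule: infinite_finite_induct) (auto simp: ip0 ip_add)
  define a where "a j l = ip (\<tau> j) (\<omega> l)" for j l
  have G: "ip (\<tau> j) (\<tau> k) = (\<Sum>l=1..d. a j l * st (a k l))" for j k
  proof -
    have "ip (\<tau> j) (\<tau> k) = ip (\<Sum>l=1..d. act (ip (\<tau> j) (\<omega> l)) (\<omega> l)) (\<tau> k)"
      using arg_cong[where f="\<lambda>u. ip u (\<tau> k)", OF ex[of "\<tau> j"]] by simp
    also have "\<dots> = (\<Sum>l=1..d. a j l * ip (\<omega> l) (\<tau> k))" by (simp add: ip_sum ip_act a_def)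
    also have "\<dots> = (\<Sum>l=1..d. a j l * st (a k l))" by (simp add: a_def ip_st)
    finally show ?thesis .
  qed
  have unit: "(\<Sum>l=1..d. a j l * st (a j l)) = 1" if "j \<in> {1..n}" for j
    using G[of j j] assms(5) that by simp
  define Gm where "Gm j k = ip (\<tau> j) (\<tau> k)" for j k
  have MFPe: "MFP ip \<tau> n = (\<Sum>j=1..n. \<Sum>k=1..n. Gm j k * st (Gm j k))"
    unfolding MFP_def Gm_def by (intro sum.cong refl) (simp add: ip_st)
  have KM: "Kc (MFP ip \<tau> n)" unfolding MFPe by (intro K_sum K_xx)
  have stM: "st (MFP ip \<tau> n) = MFP ip \<tau> n" using KM unfolding Kc_def by blast

  have nG: "norm (Gm j k * st (Gm j k)) \<le> 1" if jk: "j \<in> {1..n}" "k \<in> {1..n}" for j k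
  proof -
    define D where "D l m = a j l * a k m - a j m * a k l" for l m
    define P where "P l = a j l * st (a j l)" for l
    define Q where "Q l = a k l * st (a k l)" for l
    define R where "R l = a j l * st (a k l)" for l
    define R' where "R' l = a k l * st (a j l)" for l
    have e1: "D l m * st (D l m) = P l * Q m - R l * R' m - R m * R' l + P m * Q l" for l m
      unfolding D_def P_def Q_def R_def R'_def by (simp add: st_diff st_mult_comm algebra_simps)
    have "(\<Sum>l=1..d. \<Sum>m=1..d. D l m * st (D l m)) =
       (\<Sum>l=1..d. \<Sum>m=1..d. P l * Q m) - (\<Sum>l=1..d. \<Sum>m=1..d. R l * R' m)
       - (\<Sum>l=1..d. \<Sum>m=1..d. R' l * R m) + (\<Sum>l=1..d. \<Sum>m=1..d. Q l * P m)"
      by (simp add: e1 sum.distrib sum_subtractf mult.commute[of "R' _" "R _"] mult.commute[of "Q _" "P _"])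
    also have "\<dots> = sum P {1..d} * sum Q {1..d} - sum R {1..d} * sum R' {1..d}
       - sum R' {1..d} * sum R {1..d} + sum Q {1..d} * sum P {1..d}"
      by (simp add: sum_product)
    also have "sum P {1..d} = 1" unfolding P_def using unit jk by simp
    also have "sum Q {1..d} = 1" unfolding Q_def using unit jk by simp
    also have "sum R {1..d} = Gm j k" unfolding R_def Gm_def G ..
    also have "sum R' {1..d} = st (Gm j k)" unfolding R'_def Gm_def G
      by (simp add: st_sum st_mult)
    also have "(1::'a) * 1 - Gm j k * st (Gm j k) - st (Gm j k) * Gm j k + 1 * 1 = 2 * (1 - Gm j k * st (Gm j k))"
      by (rule lag_alg)
    finally have eq: "(\<Sum>l=1..d. \<Sum>m=1..d. D l m * st (D l m)) = 2 * (1 - Gm j k * st (Gm j k))" .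
    have lag: "of_real 1 - Gm j k * st (Gm j k) = (1/2) *\<^sub>R (\<Sum>l=1..d. \<Sum>m=1..d. D l m * st (D l m))"
      unfolding eq by (simp only: mult_2 scaleR_half_double of_real_1)
    have "Kc (of_real 1 - Gm j k * st (Gm j k))" unfolding lag
      by (intro K_scale K_sum K_xx) auto
    from K_norm[OF K_xx this] show ?thesis by simp
  qed
  have c1: "norm (MFP ip \<tau> n) \<le> (real n)\<^sup>2"
  proof -
    have "norm (MFP ip \<tau> n) \<le> (\<Sum>j=1..n. norm (\<Sum>k=1..n. Gm j k * st (Gm j k)))"
      unfolding MFPe by (rule norm_sum)
    also have "\<dots> \<le> (\<Sum>j=1..n. \<Sum>k=1..n. norm (Gm j k * st (Gm j k)))"
      by (intro sum_mono norm_sum)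
    also have "\<dots> \<le> (\<Sum>j=1..n. \<Sum>k=1..n. (1::real))"
      by (intro sum_mono nG) auto
    also have "\<dots> = (real n)\<^sup>2" by (simp add: power2_eq_square)
    finally show ?thesis .
  qed

  have c2: "alg_le st sc (MFP ip \<tau> n) (of_real (norm (MFP ip \<tau> n)))"
  proof -
    have "Kc (of_real (norm (MFP ip \<tau> n)) - MFP ip \<tau> n)"
      unfolding Kc_def using stM
      by (auto simp: st_diff st_of_real intro!: exI[of _ "norm (MFP ip \<tau> n)"])
    then show ?thesis unfolding alg_le_def using stM K_pos by (simp add: st_of_real)
  qed

  have "Kc (MFP ip \<tau> n - of_real ((real n)\<^sup>2 / real d))"
  proof (cases "d = 0")
    case True
    have "n = 0"
    proof (rule ccontr)
      assume "n \<noteq> 0"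
      then have "(1::nat) \<in> {1..n}" by simp
      from unit[OF this] True show False by simp
    qed
    then show ?thesis using True by (simp add: MFP_def K_0)
  next
    case False
    then have d0: "real d > 0" by simp
    define H where "H l m = (\<Sum>j=1..n. a j l * st (a j m))" for l m
    have stH: "st (H l m) = (\<Sum>k=1..n. a k m * st (a k l))" for l m
      unfolding H_def by (simp add: st_sum st_mult)
    have stG: "st (Gm j k) = (\<Sum>m=1..d. a k m * st (a j m))" for j k
      unfolding Gm_def G by (simp add: st_sum st_mult)
    have MH: "MFP ip \<tau> n = (\<Sum>l=1..d. \<Sum>m=1..d. H l m * st (H l m))"
      unfolding MFPe stG stH unfolding Gm_def G H_def by (rule MH_gen)
    define x where "x l = H l l" for l
    have stx: "st (x l) = x l" for l unfolding x_def stH unfolding H_def ..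
    have tr: "(\<Sum>l=1..d. x l) = of_nat n"
    proof -
      have "(\<Sum>l=1..d. x l) = (\<Sum>j=1..n. \<Sum>l=1..d. a j l * st (a j l))"
        unfolding x_def H_def by (rule sum.swap)
      also have "\<dots> = (\<Sum>j=1..n. 1)" using unit by simp
      finally show ?thesis by simp
    qed
    define OD where "OD = (\<Sum>l=1..d. \<Sum>m=1..d. (if l = m then 0 else H l m * st (H l m)))"
    have split: "MFP ip \<tau> n = OD + (\<Sum>l=1..d. x l * x l)"
    proof -
      have A: "(\<Sum>m=1..d. H l m * st (H l m)) = (\<Sum>m=1..d. (if l = m then 0 else H l m * st (H l m)))
           + (\<Sum>m=1..d. (if l = m then H l m * st (H l m) else 0))" for l
        by (subst sum.distrib[symmetric]) (auto intro!: sum.cong)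
      have B: "(\<Sum>m=1..d. (if l = m then H l m * st (H l m) else 0)) = x l * x l" if "l \<in> {1..d}" for l
        using that stx[of l] by (simp add: sum.delta' x_def)
      have "MFP ip \<tau> n = (\<Sum>l=1..d. (\<Sum>m=1..d. (if l = m then 0 else H l m * st (H l m))) + x l * x l)"
        unfolding MH by (rule sum.cong[OF refl]) (simp only: A B)
      then show ?thesis unfolding OD_def by (simp add: sum.distrib)
    qed
    have sq: "(\<Sum>l=1..d. \<Sum>m=1..d. (x l - x m) * (x l - x m)) =
       2 * of_nat d * (\<Sum>l=1..d. x l * x l) - 2 * (of_nat n * of_nat n)"
      using sq_diff_sum[of x "{1..d}"] tr by simp
    have cc1: "of_real (1 / (2 * real d)) * (2 * of_nat d) = (1::'a)"
    proof -
      have "(2 * of_nat d :: 'a) = of_real (2 * real d)" by simp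
      then have "of_real (1 / (2 * real d)) * (2 * of_nat d) = (of_real (1 / (2 * real d)) * of_real (2 * real d) :: 'a)"
        by simp
      also have "\<dots> = of_real (1 / (2 * real d) * (2 * real d))" by (simp only: of_real_mult)
      also have "\<dots> = 1" using d0 by simp
      finally show ?thesis .
    qed
    have cc2: "of_real (1 / (2 * real d)) * (2 * (of_nat n * of_nat n)) = (of_real ((real n)\<^sup>2 / real d) :: 'a)"
    proof -
      have "(2 * (of_nat n * of_nat n) :: 'a) = of_real (2 * (real n * real n))" by simp
      then have "of_real (1 / (2 * real d)) * (2 * (of_nat n * of_nat n)) = (of_real (1 / (2 * real d)) * of_real (2 * (real n * real n)) :: 'a)"
        by simp
      also have "\<dots> = of_real (1 / (2 * real d) * (2 * (real n * real n)))" by (simp only: of_real_mult)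
      also have "1 / (2 * real d) * (2 * (real n * real n)) = (real n)\<^sup>2 / real d"
        by (simp add: power2_eq_square)
      finally show ?thesis .
    qed
    have "MFP ip \<tau> n - of_real ((real n)\<^sup>2 / real d) =
        OD + (1 / (2 * real d)) *\<^sub>R (\<Sum>l=1..d. \<Sum>m=1..d. (x l - x m) * (x l - x m))"
      by (rule final_alg[OF split sq cc1 cc2])
    moreover have "Kc OD" unfolding OD_def by (intro K_sum) (auto simp: K_0 K_xx)
    moreover have "Kc ((1 / (2 * real d)) *\<^sub>R (\<Sum>l=1..d. \<Sum>m=1..d. (x l - x m) * (x l - x m)))"
      by (intro K_scale K_sum K_sq) (auto simp: st_diff stx)
    ultimately show ?thesis using K_add by simp
  qed
  then have c3: "alg_le st sc (of_real ((real n)\<^sup>2 / real d)) (MFP ip \<tau> n)"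
    unfolding alg_le_def using stM K_pos by (simp add: st_of_real)
  show ?thesis using c1 c2 c3 by blast
qed

end
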